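(* Let $I=(N,A,V)$ be an instance with three agents $N=\{1,2,3\}$, binary valuations ($V_i(j,a)\in\{0,1\}$) satisfying the no-chore assumption ($V_i(i,a)\ge V_i(j,a)$ for all $i,j,a$). Suppose there is an agent $i\in N$ such that $\Delta_{ij}(a)=0$ for every item $a\in A$ and every $j\in N$. Then $I$ admits an EF1 complete allocation.
   Context: An allocation $\pi=(\pi_1,\pi_2,\pi_3)$ consists of pairwise disjoint bundles (complete if they cover $A$); $\pi(a)$ is the agent receiving $a$; $V_i(j,a)$ is agent $i$'s value when item $a$ goes to $j$; $V_i(\pi)=\sum_{a\text{ assigned in }\pi}V_i(\pi(a),a)$; $\pi^{i\leftrightarrow j}$ swaps bundles of $i$ and $j$. A complete allocation $\pi$ is EF1 if for all $i,j$ there exist $C\subseteq A$ with $|C|\le1$ and the allocation $\lambda$ with $\lambda_\ell=\pi_\ell\setminus C$ for all $\ell$ such that $V_i(\lambda)\ge V_i(\lambda^{i\leftrightarrow j})$. $\Delta_{ij}(a)=V_i(i,a)-V_i(j,a)$. *)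

theory Defs
  imports Complex_Main
begin

(* V i j a is agent i's value when item a
   goes to agent j. *)

definition agents :: "nat set" where
  "agents = {1, 2, 3}"

definition is_allocation :: "'a set \<Rightarrow> (nat \<Rightarrow> 'a set) \<Rightarrow> bool" where
  "is_allocation A \<pi> \<longleftrightarrow>
     (\<forall>l\<in>agents. \<pi> l \<subseteq> A) \<and>
     (\<forall>l\<in>agents. \<forall>m\<in>agents. l \<noteq> m \<longrightarrow> \<pi> l \<inter> \<pi> m = {})"

definition complete_allocation :: "'a set \<Rightarrow> (nat \<Rightarrow> 'a set) \<Rightarrow> bool" where
  "complete_allocation A \<pi> \<longleftrightarrow> is_allocation A \<pi> \<and> (\<Union>l\<in>agents. \<pi> l) = A"

(* V_i(pi) = sum over assigned items a of V_i(pi(a), a); since bundles are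
   disjoint this is the sum over agents j of the values of items in pi j. *)
definition alloc_val :: "(nat \<Rightarrow> nat \<Rightarrow> 'a \<Rightarrow> real) \<Rightarrow> nat \<Rightarrow> (nat \<Rightarrow> 'a set) \<Rightarrow> real" where
  "alloc_val V i \<pi> = (\<Sum>j\<in>agents. \<Sum>a\<in>\<pi> j. V i j a)"

definition swap_bundles :: "(nat \<Rightarrow> 'a set) \<Rightarrow> nat \<Rightarrow> nat \<Rightarrow> (nat \<Rightarrow> 'a set)" where
  "swap_bundles \<pi> i j = \<pi>(i := \<pi> j, j := \<pi> i)"

definition EF1 :: "'a set \<Rightarrow> (nat \<Rightarrow> nat \<Rightarrow> 'a \<Rightarrow> real) \<Rightarrow> (nat \<Rightarrow> 'a set) \<Rightarrow> bool" where
  "EF1 A V \<pi> \<longleftrightarrow> complete_allocation A \<pi> \<and>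
     (\<forall>i\<in>agents. \<forall>j\<in>agents. \<exists>C. C \<subseteq> A \<and> card C \<le> 1 \<and>
        (let lam = (\<lambda>l. \<pi> l - C) in alloc_val V i lam \<ge> alloc_val V i (swap_bundles lam i j)))"

definition Delta :: "(nat \<Rightarrow> nat \<Rightarrow> 'a \<Rightarrow> real) \<Rightarrow> nat \<Rightarrow> nat \<Rightarrow> 'a \<Rightarrow> real" where
  "Delta V i j a = V i i a - V i j a"

end

theory Submission
  imports Defs
begin

lemma third:
  assumes "k \<in> agents" "j \<in> agents" "k \<noteq> j"
  shows "\<exists>m. agents = {k, j, m} \<and> m \<noteq> k \<and> m \<noteq> j"
proof -
  have "k = 1 \<or> k = 2 \<or> k = 3" "j = 1 \<or> j = 2 \<or> j = 3" using assms(1,2) by (simp_all add: agents_def)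
  then show ?thesis using assms(3)
    by (intro exI[of _ "6 - k - j"]) (elim disjE; simp add: agents_def insert_commute)
qed
lemma swap_diff:
  assumes "k \<in> agents" "j \<in> agents" "k \<noteq> j"
  shows "alloc_val V k lam - alloc_val V k (swap_bundles lam k j) =
    (\<Sum>a\<in>lam k. V k k a - V k j a) - (\<Sum>a\<in>lam j. V k k a - V k j a)"
proof -
  obtain m where m: "agents = {k, j, m}" "m \<noteq> k" "m \<noteq> j"
    using third[OF assms] by blast
  show ?thesis
    unfolding alloc_val_def swap_bundles_def m(1) using m(2,3) assms(3)
    by (simp add: sum_subtractf)
qed

lemma ef_pair:
  assumes "x \<in> agents" "y \<in> agents"
    and "x \<noteq> y \<Longrightarrow> (\<Sum>a\<in>lam y. V x x a - V x y a) \<le> (\<Sum>a\<in>lam x. V x x a - V x y a)"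
  shows "alloc_val V x lam \<ge> alloc_val V x (swap_bundles lam x y)"
proof (cases "x = y")
  case True
  have "swap_bundles lam x y = lam" using True by (auto simp: swap_bundles_def)
  then show ?thesis by simp
next
  case False
  then show ?thesis using swap_diff[OF assms(1,2) False, of V lam] assms(3) by linarith
qed

lemma three:
  assumes "i \<in> agents"
  shows "\<exists>k l. agents = {i, k, l} \<and> i \<noteq> k \<and> i \<noteq> l \<and> k \<noteq> l \<and> k \<in> agents \<and> l \<in> agents"
proof -
  have "i = 1 \<or> i = 2 \<or> i = 3" using assms by (simp add: agents_def)
  then show ?thesis
    by (intro exI[of _ "if i = 1 then 2 else 1"] exI[of _ "if i = 3 then 2 else 3"])
      (elim disjE; simp add: agents_def insert_commute)
qed

lemma sum_restrict:
  assumes "finite S" "\<forall>a\<in>S - T. f a = 0"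
  shows "sum f S = sum f (S \<inter> T)"
  by (rule sum.mono_neutral_cong_right) (use assms in auto)

theorem lemma5:
  fixes A :: "'a set" and V :: "nat \<Rightarrow> nat \<Rightarrow> 'a \<Rightarrow> real"
  assumes fin: "finite A"
    and binary: "\<forall>i\<in>agents. \<forall>j\<in>agents. \<forall>a\<in>A. V i j a \<in> {0, 1}"
    and no_chore: "\<forall>i\<in>agents. \<forall>j\<in>agents. \<forall>a\<in>A. V i i a \<ge> V i j a"
    and special: "\<exists>i\<in>agents. \<forall>a\<in>A. \<forall>j\<in>agents. Delta V i j a = 0"
  shows "\<exists>\<pi>. complete_allocation A \<pi> \<and> EF1 A V \<pi>"
proof -
  obtain i where i: "i \<in> agents" and sp: "\<forall>a\<in>A. \<forall>j\<in>agents. Delta V i j a = 0"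
    using special by blast
  obtain k l where kl: "agents = {i, k, l}" "i \<noteq> k" "i \<noteq> l" "k \<noteq> l" "k \<in> agents" "l \<in> agents"
    using three[OF i] by blast
  have D01: "V x x a - V x y a \<in> {0, 1}" if "x \<in> agents" "y \<in> agents" "a \<in> A" for x y a
  proof -
    have "V x x a \<in> {0, 1}" "V x y a \<in> {0, 1}" "V x x a \<ge> V x y a"
      using binary no_chore that by blast+
    then show ?thesis by auto
  qed
  have Dge: "V x x a - V x y a \<ge> 0" if "x \<in> agents" "y \<in> agents" "a \<in> A" for x y a
    using no_chore that by simp
  define P where "P = {a\<in>A. V k k a - V k l a \<noteq> 0}"
  define Q where "Q = {a\<in>A. V l l a - V l k a \<noteq> 0}"
  define B where "B = P \<inter> Q"
  have finB: "finite B" using fin by (auto simp: B_def P_def)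
  obtain B2' where B2': "B2' \<subseteq> B" "card B2' = card B div 2"
    using obtain_subset_with_card_n[of "card B div 2" B] by auto
  define B1 where "B1 = B - B2'"
  define B2 where "B2 = B - B1"
  have B2eq: "B2 = B2'" using B2' by (auto simp: B1_def B2_def)
  have finB1: "finite B1" using finB by (simp add: B1_def)
  have finB2: "finite B2" using finB by (simp add: B2_def)
  have cB1: "card B1 = card B - card B2'" unfolding B1_def
    using B2' finB by (simp add: card_Diff_subset finite_subset)
  have B1: "B1 \<subseteq> B" "card B2 \<le> card B1" "card B1 \<le> card B2 + 1"
    using cB1 B2' B2eq by (auto simp: B1_def)
  define X where "X = B1 \<union> (A - Q)"
  define Y where "Y = A - X"
  define pi where "pi = (\<lambda>n. if n = k then X else if n = l then Y else ({}::'a set))"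
  have XA: "X \<subseteq> A" using B1 by (auto simp: X_def B_def P_def)
  have finX: "finite X" using XA fin finite_subset by blast
  have finY: "finite Y" using fin by (simp add: Y_def)
  have piA: "pi n \<subseteq> A" for n using XA by (auto simp: pi_def Y_def)
  have pis: "pi i = {}" "pi k = X" "pi l = Y" using kl by (auto simp: pi_def)
  have XY: "X \<inter> Y = {}" "Y \<inter> X = {}" "X \<union> Y = A" using XA by (auto simp: Y_def)
  have comp: "complete_allocation A pi"
    unfolding complete_allocation_def is_allocation_def kl(1)
    using piA pis XY kl(2-4) by (simp add: Int_commute)
  have sumB: "(\<Sum>a\<in>S. V x x a - V x y a) = real (card S)"
    if "S \<subseteq> A" "\<forall>a\<in>S. V x x a - V x y a \<noteq> 0" "x \<in> agents" "y \<in> agents" for S x y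
  proof -
    have "(\<Sum>a\<in>S. V x x a - V x y a) = (\<Sum>a\<in>S. 1)"
      using D01[OF that(3,4)] that(1,2) by (intro sum.cong) auto
    then show ?thesis by simp
  qed
  have EFi: "\<exists>C. C \<subseteq> A \<and> card C \<le> 1 \<and>
        (let lam = (\<lambda>n. pi n - C) in alloc_val V i lam \<ge> alloc_val V i (swap_bundles lam i y))"
    if y: "y \<in> agents" for y
  proof -
    have z: "(\<Sum>a\<in>S. V i i a - V i y a) = 0" if "S \<subseteq> A" for S
      using sp y that by (intro sum.neutral) (auto simp: Delta_def)
    show ?thesis
      by (rule exI[of _ "{}"], simp add: Let_def, rule ef_pair[OF i y]) (simp add: z piA)
  qed
  have EFk: "\<exists>C. C \<subseteq> A \<and> card C \<le> 1 \<and>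
        (let lam = (\<lambda>n. pi n - C) in alloc_val V k lam \<ge> alloc_val V k (swap_bundles lam k y))"
    if y: "y \<in> agents" for y
  proof -
    have "(\<Sum>a\<in>pi y. V k k a - V k y a) \<le> (\<Sum>a\<in>pi k. V k k a - V k y a)" if kne: "k \<noteq> y"
    proof -
      consider "y = i" | "y = l" using y kl kne by auto
      then show ?thesis
      proof cases
        case 1
        then have "pi y = {}" using kl by (auto simp: pi_def)
        moreover have "(\<Sum>a\<in>pi k. V k k a - V k y a) \<ge> 0"
          using Dge[OF kl(5) y] piA by (intro sum_nonneg) auto
        ultimately show ?thesis by simp
      next
        case 2
        have "(\<Sum>a\<in>pi y. V k k a - V k y a) = (\<Sum>a\<in>Y \<inter> P. V k k a - V k y a)"
          using 2 kl by (simp add: pi_def, intro sum_restrict[OF finY]) (auto simp: P_def Y_def)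
        also have "Y \<inter> P = B2" by (auto simp: Y_def X_def B2_def B_def P_def)
        also have "(\<Sum>a\<in>B2. V k k a - V k y a) = real (card B2)"
          using 2 kl by (intro sumB) (auto simp: B2_def B_def P_def)
        also have "\<dots> \<le> real (card B1)" using B1 by simp
        also have "real (card B1) = (\<Sum>a\<in>B1. V k k a - V k y a)"
          using 2 kl B1 by (intro sumB[symmetric]) (auto simp: B_def P_def)
        also have "\<dots> \<le> (\<Sum>a\<in>X. V k k a - V k y a)"
          using Dge[OF kl(5) y] XA finX by (intro sum_mono2) (auto simp: X_def)
        also have "X = pi k" using kl by (simp add: pi_def)
        finally show ?thesis .
      qed
    qed
    then show ?thesis
      by (intro exI[of _ "{}"]) (simp add: Let_def ef_pair[OF kl(5) y])
  qed
  have EFl: "\<exists>C. C \<subseteq> A \<and> card C \<le> 1 \<and>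
        (let lam = (\<lambda>n. pi n - C) in alloc_val V l lam \<ge> alloc_val V l (swap_bundles lam l y))"
    if y: "y \<in> agents" for y
  proof (cases "y = l")
    case True
    then show ?thesis using ef_pair[OF kl(6) y] by (intro exI[of _ "{}"]) (simp add: Let_def)
  next
    case False
    consider "y = i" | "y = k" using y kl False by auto
    then show ?thesis
    proof cases
      case 1
      have "(\<Sum>a\<in>pi y. V l l a - V l y a) \<le> (\<Sum>a\<in>pi l. V l l a - V l y a)"
      proof -
        have "pi y = {}" using kl 1 by (auto simp: pi_def)
        moreover have "(\<Sum>a\<in>pi l. V l l a - V l y a) \<ge> 0"
          using Dge[OF kl(6) y] piA by (intro sum_nonneg) auto
        ultimately show ?thesis by simp
      qed
      then show ?thesis using ef_pair[OF kl(6) y]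
        by (intro exI[of _ "{}"]) (simp add: Let_def)
    next
      case 2
      have XQ: "X \<inter> Q = B1" using B1 by (auto simp: X_def B_def)
      have Yge: "(\<Sum>a\<in>Y - C. V l l a - V l y a) \<ge> real (card B2)" if "C \<inter> B2 = {}" for C
      proof -
        have "real (card B2) = (\<Sum>a\<in>B2. V l l a - V l y a)"
          using 2 kl by (intro sumB[symmetric]) (auto simp: B2_def B_def Q_def)
        also have "\<dots> \<le> (\<Sum>a\<in>Y - C. V l l a - V l y a)"
          using Dge[OF kl(6) y] finY that B1 by (intro sum_mono2) (auto simp: Y_def X_def B2_def B_def P_def Q_def)
        finally show ?thesis .
      qed
      have Xeq: "(\<Sum>a\<in>X - C. V l l a - V l y a) = real (card (B1 - C))" for C
      proof -
        have "(\<Sum>a\<in>X - C. V l l a - V l y a) = (\<Sum>a\<in>(X - C) \<inter> Q. V l l a - V l y a)"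
          using 2 finX XA by (intro sum_restrict) (auto simp: Q_def)
        also have "(X - C) \<inter> Q = B1 - C" using XQ by auto
        also have "(\<Sum>a\<in>B1 - C. V l l a - V l y a) = real (card (B1 - C))"
          using 2 kl B1 by (intro sumB) (auto simp: B_def Q_def P_def)
        finally show ?thesis .
      qed
      show ?thesis
      proof (cases "B1 = {}")
        case True
        have "(\<Sum>a\<in>pi y. V l l a - V l y a) \<le> (\<Sum>a\<in>pi l. V l l a - V l y a)"
          using Xeq[of "{}"] Yge[of "{}"] True 2 kl by (simp add: pi_def)
        then show ?thesis using ef_pair[OF kl(6) y]
          by (intro exI[of _ "{}"]) (simp add: Let_def)
      next
        case False
        then obtain c where c: "c \<in> B1" by blast
        have cA: "c \<in> A" using c B1 by (auto simp: B_def P_def)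
        have cdisj: "{c} \<inter> B2 = {}" using c by (auto simp: B2_def)
        have "card (B1 - {c}) = card B1 - 1" using c finB1 by simp
        moreover have "card B1 \<le> card B2 + 1" using B1 by simp
        ultimately have "real (card (B1 - {c})) \<le> real (card B2)" by simp
        then have "(\<Sum>a\<in>pi y - {c}. V l l a - V l y a) \<le> (\<Sum>a\<in>pi l - {c}. V l l a - V l y a)"
          using Xeq[of "{c}"] Yge[OF cdisj] 2 kl by (simp add: pi_def)
        then show ?thesis using ef_pair[OF kl(6) y, of V "\<lambda>n. pi n - {c}"] cA
          by (intro exI[of _ "{c}"]) (simp add: Let_def)
      qed
    qed
  qed
  have all: "\<forall>x\<in>agents. \<forall>y\<in>agents. \<exists>C. C \<subseteq> A \<and> card C \<le> 1 \<and>
        (let lam = (\<lambda>n. pi n - C) in alloc_val V x lam \<ge> alloc_val V x (swap_bundles lam x y))"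
  proof (intro ballI)
    fix x y assume x: "x \<in> agents" and y: "y \<in> agents"
    have "x \<in> {i, k, l}" using x by (simp only: kl(1))
    then have "x = i \<or> x = k \<or> x = l" by simp
    then show "\<exists>C. C \<subseteq> A \<and> card C \<le> 1 \<and>
        (let lam = (\<lambda>n. pi n - C) in alloc_val V x lam \<ge> alloc_val V x (swap_bundles lam x y))"
    proof (elim disjE)
      assume "x = i" then show ?thesis using EFi[OF y] by simp
    next
      assume "x = k" then show ?thesis using EFk[OF y] by simp
    next
      assume "x = l" then show ?thesis using EFl[OF y] by simp
    qed
  qed
  have "EF1 A V pi"
    unfolding EF1_def using comp all by blast
  then show ?thesis using comp by blast
qed

end
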